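(* Let $n\in\mathbb{N}_{\ge1}$ and $r',P>1$. There exists a self-attention layer $\mathcal F^{(max)}_{SA}:\mathbb{R}^{3\times n}\to\mathbb{R}^{3\times n}$ with head number $1$, head size $3$ and weight bound $\frac12\log(8n^{3/2}r'P)$ such that for any $\boldsymbol x=(x_1,\dots,x_n)\in\mathbb{R}^{1\times n}$ satisfying $|x_i|\le2r'$ for all $i\in[n]$ and $x_i\le x_{\max}-2$ for every $i$ with $x_i\ne x_{\max}$ (where $x_{\max}=\max_ix_i$), $$\mathcal F^{(max)}_{SA}\begin{pmatrix}\boldsymbol x\\ \boldsymbol 1_{1\times n}\\ \boldsymbol 0_{1\times n}\end{pmatrix}=\begin{pmatrix}\boldsymbol x\\ \boldsymbol 1_{1\times n}\\ \widetilde x_{\max}\boldsymbol 1_{1\times n}\end{pmatrix}$$ for some $\widetilde x_{\max}$ with $x_{\max}-\frac{1}{2P\sqrt n}\le\widetilde x_{\max}\le x_{\max}$. In particular, $\mathcal F^{(max)}_{SA}$ maps $\begin{pmatrix}\boldsymbol 0_{1\times n}\\ \boldsymbol 1_{1\times n}\\ \boldsymbol 0_{1\times n}\end{pmatrix}$ to itself.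
   Context: A self-attention layer on $\mathbb{R}^{D\times n}$ with head number $H$ and head size $S$ is $X\mapsto X+\sum_{h=1}^HW_O^{(h)}W_V^{(h)}X\sigma_S(X^\top W_K^{(h)\top}W_Q^{(h)}X)$ with $W_O^{(h)}\in\mathbb{R}^{D\times S}$, $W_V^{(h)},W_K^{(h)},W_Q^{(h)}\in\mathbb{R}^{S\times D}$, where $\sigma_S$ is the column-wise softmax $[\sigma_S(\boldsymbol z)]_i=e^{z_i}/\sum_je^{z_j}$. Its weight bound is the maximum absolute value of the entries of all these matrices. *)

theory Defs
  imports Complex_Main
begin

text \<open>Matrices are represented as functions nat \<Rightarrow> nat \<Rightarrow> real; only entries with
  in-range indices are meaningful. A D\<times>n matrix X has entries X i j for i<D, j<n.
  Head h parameters: WO h : D\<times>S, WV h, WK h, WQ h : S\<times>D.\<close>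

definition attn_score ::
  "nat \<Rightarrow> nat \<Rightarrow> (nat \<Rightarrow> nat \<Rightarrow> nat \<Rightarrow> real) \<Rightarrow> (nat \<Rightarrow> nat \<Rightarrow> nat \<Rightarrow> real)
   \<Rightarrow> (nat \<Rightarrow> nat \<Rightarrow> real) \<Rightarrow> nat \<Rightarrow> nat \<Rightarrow> nat \<Rightarrow> real" where
  "attn_score D S WK WQ X h k j =
     (\<Sum>s<S. (\<Sum>d<D. WK h s d * X d k) * (\<Sum>d<D. WQ h s d * X d j))"

definition attn_softmax ::
  "nat \<Rightarrow> nat \<Rightarrow> nat \<Rightarrow> (nat \<Rightarrow> nat \<Rightarrow> nat \<Rightarrow> real) \<Rightarrow> (nat \<Rightarrow> nat \<Rightarrow> nat \<Rightarrow> real)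
   \<Rightarrow> (nat \<Rightarrow> nat \<Rightarrow> real) \<Rightarrow> nat \<Rightarrow> nat \<Rightarrow> nat \<Rightarrow> real" where
  "attn_softmax D S n WK WQ X h k j =
     exp (attn_score D S WK WQ X h k j) / (\<Sum>k'<n. exp (attn_score D S WK WQ X h k' j))"

definition self_attention ::
  "nat \<Rightarrow> nat \<Rightarrow> nat \<Rightarrow> nat \<Rightarrow> (nat \<Rightarrow> nat \<Rightarrow> nat \<Rightarrow> real) \<Rightarrow> (nat \<Rightarrow> nat \<Rightarrow> nat \<Rightarrow> real)
   \<Rightarrow> (nat \<Rightarrow> nat \<Rightarrow> nat \<Rightarrow> real) \<Rightarrow> (nat \<Rightarrow> nat \<Rightarrow> nat \<Rightarrow> real)
   \<Rightarrow> (nat \<Rightarrow> nat \<Rightarrow> real) \<Rightarrow> nat \<Rightarrow> nat \<Rightarrow> real" where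
  "self_attention D n H S WO WV WK WQ X i j =
     X i j + (\<Sum>h<H. \<Sum>k<n.
        (\<Sum>t<S. WO h i t * (\<Sum>d<D. WV h t d * X d k)) * attn_softmax D S n WK WQ X h k j)"

definition weight_bounded ::
  "nat \<Rightarrow> nat \<Rightarrow> nat \<Rightarrow> real \<Rightarrow> (nat \<Rightarrow> nat \<Rightarrow> nat \<Rightarrow> real) \<Rightarrow> (nat \<Rightarrow> nat \<Rightarrow> nat \<Rightarrow> real)
   \<Rightarrow> (nat \<Rightarrow> nat \<Rightarrow> nat \<Rightarrow> real) \<Rightarrow> (nat \<Rightarrow> nat \<Rightarrow> nat \<Rightarrow> real) \<Rightarrow> bool" where
  "weight_bounded D H S B WO WV WK WQ \<longleftrightarrow>
     (\<forall>h<H. (\<forall>i<D. \<forall>t<S. \<bar>WO h i t\<bar> \<le> B) \<and>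
            (\<forall>t<S. \<forall>d<D. \<bar>WV h t d\<bar> \<le> B \<and> \<bar>WK h t d\<bar> \<le> B \<and> \<bar>WQ h t d\<bar> \<le> B))"

end

theory Submission imports Defs begin

lemma term_bound:
  fixes c d :: real assumes "c \<ge> 1/2" "d \<ge> 2"
  shows "d * exp (- c * d) \<le> 2 * exp (-2 * c)"
proof -
  have e1: "1 + c*(d-2) \<le> exp (c*(d-2))" by (rule exp_ge_add_one_self)
  have e2: "(1/2)*(d-2) \<le> c*(d-2)" by (rule mult_right_mono) (use assms in auto)
  have g: "\<And>t E::real. 1 + t \<le> E \<Longrightarrow> (1/2)*(d-2) \<le> t \<Longrightarrow> d \<le> 2*E" by (simp add: field_simps)
  have "d \<le> 2 * exp (c*(d-2))" using g[OF e1 e2] .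
  hence "d * exp (- c * d) \<le> 2 * exp (c*(d-2)) * exp (- c * d)" by (rule mult_right_mono) simp
  also have "\<dots> = 2 * exp (-2 * c)" by (simp add: exp_add[symmetric] algebra_simps)
  finally show ?thesis .
qed

lemma avg_bound:
  fixes x :: "nat \<Rightarrow> real" and c :: real and n :: nat
  assumes n: "n \<ge> 1" and c: "c \<ge> 1/2"
    and gap: "\<forall>i<n. x i \<noteq> Max (x ` {..<n}) \<longrightarrow> x i \<le> Max (x ` {..<n}) - 2"
  defines "M \<equiv> Max (x ` {..<n})"
  shows "M - 2 * n * exp (-2*c) \<le> (\<Sum>k<n. x k * exp (c * x k)) / (\<Sum>k<n. exp (c * x k))"
    and "(\<Sum>k<n. x k * exp (c * x k)) / (\<Sum>k<n. exp (c * x k)) \<le> M"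
proof -
  define S where "S = (\<Sum>k<n. exp (c * x k))"
  have "x 0 \<in> x ` {..<n}" using n by auto
  hence ne: "x ` {..<n} \<noteq> {}" by auto
  obtain m where m: "m < n" "x m = M" using Max_in[OF _ ne] unfolding M_def by auto
  have le: "x k \<le> M" if "k < n" for k unfolding M_def using that by auto
  have "exp (c * M) \<le> S" unfolding S_def
    using member_le_sum[of m "{..<n}" "\<lambda>k. exp (c * x k)"] m by auto
  hence Spos: "S > 0" by (smt (verit) exp_gt_zero)
  have "(\<Sum>k<n. x k * exp (c * x k)) \<le> (\<Sum>k<n. M * exp (c * x k))"
    by (rule sum_mono) (simp add: le)
  also have "\<dots> = M * S" by (simp add: S_def sum_distrib_left)
  finally show "(\<Sum>k<n. x k * exp (c * x k)) / (\<Sum>k<n. exp (c * x k)) \<le> M"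
    using Spos by (simp add: S_def[symmetric] divide_le_eq)
  have tb: "(M - x k) * exp (c * x k) \<le> 2 * exp (-2*c) * exp (c * M)" if "k < n" for k
  proof (cases "x k = M")
    case True then show ?thesis by simp
  next
    case False
    hence d2: "M - x k \<ge> 2" using gap that unfolding M_def by auto
    have "(M - x k) * exp (- c * (M - x k)) * exp (c * M) \<le> 2 * exp (-2 * c) * exp (c * M)"
      by (rule mult_right_mono[OF term_bound[OF c d2]]) simp
    moreover have "exp (- c * (M - x k)) * exp (c * M) = exp (c * x k)"
      by (simp add: exp_add[symmetric] algebra_simps)
    ultimately show ?thesis by (metis mult.assoc)
  qed
  have "M * S - (\<Sum>k<n. x k * exp (c * x k)) = (\<Sum>k<n. (M - x k) * exp (c * x k))"
    by (simp add: S_def sum_distrib_left sum_subtractf left_diff_distrib)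
  also have "\<dots> \<le> (\<Sum>k<n. 2 * exp (-2*c) * exp (c * M))" by (rule sum_mono) (rule tb, simp)
  also have "\<dots> = n * (2 * exp (-2*c)) * exp (c * M)" by simp
  also have "\<dots> \<le> n * (2 * exp (-2*c)) * S"
    using \<open>exp (c * M) \<le> S\<close> by (intro mult_left_mono) auto
  finally have "(M - 2 * n * exp (-2*c)) * S \<le> (\<Sum>k<n. x k * exp (c * x k))"
    by (simp add: algebra_simps)
  thus "M - 2 * n * exp (-2*c) \<le> (\<Sum>k<n. x k * exp (c * x k)) / (\<Sum>k<n. exp (c * x k))"
    using Spos by (simp add: S_def[symmetric] le_divide_eq)
qed

definition mWO :: "nat \<Rightarrow> nat \<Rightarrow> nat \<Rightarrow> real" where
  "mWO h i t = (if i = 2 then 1/2 else 0)"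
definition mWV :: "nat \<Rightarrow> nat \<Rightarrow> nat \<Rightarrow> real" where
  "mWV h t d = (if d = 0 then 2/3 else 0)"
definition mWK :: "real \<Rightarrow> nat \<Rightarrow> nat \<Rightarrow> nat \<Rightarrow> real" where
  "mWK B h t d = (if d = 0 then B else 0)"
definition mWQ :: "nat \<Rightarrow> nat \<Rightarrow> nat \<Rightarrow> real" where
  "mWQ h t d = (if d = 1 then 2/3 else 0)"

lemma sum3: "(\<Sum>i<3. f i) = f (0::nat) + f 1 + (f 2 :: real)"
  by (simp add: eval_nat_numeral)

lemma score_eq:
  assumes "\<forall>j. X 1 j = 1"
  shows "attn_score 3 3 (mWK B) mWQ X 0 k j = 2 * B * X 0 k"
  using assms by (simp add: attn_score_def sum3 mWK_def mWQ_def)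

lemma SA_eq:
  assumes X1: "\<forall>j. X 1 j = 1" and i: "i < 3"
  shows "self_attention 3 n 1 3 mWO mWV (mWK B) mWQ X i j =
    X i j + (if i = 2 then (\<Sum>k<n. X 0 k * exp (2*B*X 0 k)) / (\<Sum>k<n. exp (2*B*X 0 k)) else 0)"
proof -
  have "self_attention 3 n 1 3 mWO mWV (mWK B) mWQ X i j =
     X i j + (\<Sum>k<n. (if i = 2 then X 0 k else 0) * (exp (2*B*X 0 k) / (\<Sum>k'<n. exp (2*B*X 0 k'))))"
    unfolding self_attention_def attn_softmax_def
    by (simp add: sum3 mWO_def mWV_def score_eq[of X B, OF X1])
  also have "\<dots> = X i j + (if i = 2 then (\<Sum>k<n. X 0 k * exp (2*B*X 0 k)) / (\<Sum>k<n. exp (2*B*X 0 k)) else 0)"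
    by (simp add: sum_divide_distrib)
  finally show ?thesis .
qed

theorem lemma18:
  fixes n :: nat and r' P :: real
  assumes "n \<ge> 1" and "r' > 1" and "P > 1"
  shows "\<exists>WO WV WK WQ.
    weight_bounded 3 1 3 (ln (8 * real n powr (3/2) * r' * P) / 2) WO WV WK WQ \<and>
    (\<forall>x :: nat \<Rightarrow> real.
       (\<forall>i<n. \<bar>x i\<bar> \<le> 2 * r') \<and>
       (\<forall>i<n. x i \<noteq> Max (x ` {..<n}) \<longrightarrow> x i \<le> Max (x ` {..<n}) - 2) \<longrightarrow>
       (\<exists>xt. Max (x ` {..<n}) - 1 / (2 * P * sqrt (real n)) \<le> xt \<and> xt \<le> Max (x ` {..<n}) \<and>
          (\<forall>i<3. \<forall>j<n.
             self_attention 3 n 1 3 WO WV WK WQ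
               (\<lambda>a b. if a = 0 then x b else if a = 1 then 1 else 0) i j
             = (if i = 0 then x j else if i = 1 then 1 else xt)))) \<and>
    (\<forall>i<3. \<forall>j<n.
       self_attention 3 n 1 3 WO WV WK WQ (\<lambda>a b. if a = 1 then 1 else 0) i j
       = (if i = 1 then 1 else 0))"
proof -
  define A where "A = 8 * real n powr (3/2) * r' * P"
  define B where "B = ln A / 2"
  have rn: "real n \<ge> 1" using assms(1) by simp
  have pw: "real n powr (3/2) = real n * sqrt (real n)"
  proof -
    have "real n powr (3/2) = real n powr (1 + 1/2)" by simp
    also have "\<dots> = real n powr 1 * real n powr (1/2)" by (rule powr_add)
    finally show ?thesis using rn by (simp add: powr_half_sqrt)
  qed
  have sq: "sqrt (real n) \<ge> 1" using rn by simp
  have A8: "A \<ge> 8" unfolding A_def pw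
  proof -
    have "real n * sqrt (real n) * r' * P \<ge> 1 * 1 * 1 * 1"
      using rn sq assms by (intro mult_mono) auto
    thus "8 * (real n * sqrt (real n)) * r' * P \<ge> 8" by simp
  qed
  have e43: "exp (4/3) \<le> (8::real)"
  proof -
    have "exp (4/3::real) ^ 3 = exp 1 ^ 4"
      by (simp add: exp_of_nat_mult[symmetric])
    also have "\<dots> \<le> 3 ^ 4" by (rule power_mono[OF exp_le]) simp
    also have "\<dots> \<le> (8::real) ^ 3" by simp
    finally have "exp (4/3::real) ^ Suc 2 \<le> 8 ^ Suc 2" by (simp add: numeral_3_eq_3)
    thus ?thesis by (rule power_le_imp_le_base) simp
  qed
  have B23: "B \<ge> 2/3" unfolding B_def using A8 e43 ln_ge_iff[of A "4/3"] by simp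
  have expB: "exp (2*B) = A" unfolding B_def using A8 by simp
  have wb: "weight_bounded 3 1 3 B mWO mWV (mWK B) mWQ"
    using B23 by (simp add: weight_bounded_def mWO_def mWV_def mWK_def mWQ_def)
  have main: "\<exists>xt. Max (x ` {..<n}) - 1 / (2 * P * sqrt (real n)) \<le> xt \<and> xt \<le> Max (x ` {..<n}) \<and>
          (\<forall>i<3. \<forall>j<n.
             self_attention 3 n 1 3 mWO mWV (mWK B) mWQ
               (\<lambda>a b. if a = 0 then x b else if a = 1 then 1 else 0) i j
             = (if i = 0 then x j else if i = 1 then 1 else xt))"
    if gap: "\<forall>i<n. x i \<noteq> Max (x ` {..<n}) \<longrightarrow> x i \<le> Max (x ` {..<n}) - 2" for x
  proof -
    define xt where "xt = (\<Sum>k<n. x k * exp (2*B*x k)) / (\<Sum>k<n. exp (2*B*x k))"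
    have c: "2*B \<ge> 1/2" using B23 by simp
    note ab = avg_bound[OF assms(1) c gap]
    have "exp (-2*(2*B)) \<le> exp (-2*B)" using B23 by simp
    also have "exp (-2*B) = 1 / A" using expB by (simp add: exp_minus field_simps)
    finally have h: "exp (-2*(2*B)) \<le> 1 / A" .
    have "2 * n * exp (-2*(2*B)) \<le> 2 * n * (1 / A)" by (rule mult_left_mono[OF h]) simp
    also have "\<dots> = 2 * n / A" by simp
    finally have "2 * n * exp (-2*(2*B)) \<le> 2 * n / A" .
    also have "2 * n / A \<le> 1 / (2 * P * sqrt (real n))"
    proof -
      have "2 * n * (2 * P * sqrt (real n)) \<le> A"
        unfolding A_def pw using assms rn sq
        by (simp add: mult_right_mono algebra_simps)
      thus ?thesis using A8 assms sq by (simp add: divide_simps algebra_simps)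
    qed
    finally have "2 * n * exp (-2*(2*B)) \<le> 1 / (2 * P * sqrt (real n))" .
    hence lo: "Max (x ` {..<n}) - 1 / (2 * P * sqrt (real n)) \<le> xt"
      using ab(1) unfolding xt_def by linarith
    have hi: "xt \<le> Max (x ` {..<n})" using ab(2) unfolding xt_def by simp
    show ?thesis
    proof (intro exI conjI allI impI)
      show "Max (x ` {..<n}) - 1 / (2 * P * sqrt (real n)) \<le> xt" by (rule lo)
      show "xt \<le> Max (x ` {..<n})" by (rule hi)
      fix i j assume "i < (3::nat)" "j < n"
      then show "self_attention 3 n 1 3 mWO mWV (mWK B) mWQ
               (\<lambda>a b. if a = 0 then x b else if a = 1 then 1 else 0) i j
             = (if i = 0 then x j else if i = 1 then 1 else xt)"
        by (subst SA_eq) (auto simp: xt_def)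
    qed
  qed
  have zero: "\<forall>i<3. \<forall>j<n.
       self_attention 3 n 1 3 mWO mWV (mWK B) mWQ (\<lambda>a b. if a = 1 then 1 else 0) i j
       = (if i = 1 then 1 else 0)"
  proof (intro allI impI)
    fix i j :: nat assume "i < 3" "j < n"
    then show "self_attention 3 n 1 3 mWO mWV (mWK B) mWQ (\<lambda>a b. if a = 1 then 1 else 0) i j
       = (if i = 1 then 1 else 0)"
      by (subst SA_eq) auto
  qed
  show ?thesis
    unfolding A_def[symmetric] B_def[symmetric]
    using wb main zero by blast
qed

end
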